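(* Let $f:X\to Y$ be a local homeomorphism between metric spaces, where $X$ is complete and $Y$ is path-connected and locally $\mathcal R$-contractible. If there exists $\alpha>0$ such that $D_x^-f\ge\alpha$ for all $x\in X$, then $f$ is a covering projection.
   Context: A path $p:[0,1]\to Y$ is rectifiable if its length $\sup\sum_i d(p(t_i),p(t_{i+1}))$ (over partitions of $[0,1]$) is finite. $Y$ is locally $\mathcal R$-contractible if every $y_0\in Y$ has an open neighborhood $U$ with a continuous homotopy $H:U\times[0,1]\to U$ such that $H(y_0,t)=y_0$ for all $t$, $H(y,0)=y_0$, $H(y,1)=y$ for all $y\in U$, and each path $t\mapsto H(y,t)$ is rectifiable. For non-isolated $x\in X$, $D_x^-f=\liminf_{z\to x,\,z\neq x}\frac{d(f(z),f(x))}{d(z,x)}$; $X$ is assumed to have no isolated points. *)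

theory Defs
  imports "HOL-Analysis.Analysis"
begin

definition local_homeomorphism :: "('a::topological_space \<Rightarrow> 'b::topological_space) \<Rightarrow> bool" where
  "local_homeomorphism f \<longleftrightarrow>
     (\<forall>x. \<exists>U V g. x \<in> U \<and> open U \<and> open V \<and> homeomorphism U V f g)"

definition rectifiable_path :: "(real \<Rightarrow> 'a::metric_space) \<Rightarrow> bool" where
  "rectifiable_path p \<longleftrightarrow>
     bdd_above {(\<Sum>i<n. dist (p (t i)) (p (t (Suc i)))) | t n.
                  t 0 = 0 \<and> t n = 1 \<and> (\<forall>i<n. t i \<le> t (Suc i))}"

definition locally_R_contractible :: "'a::metric_space set \<Rightarrow> bool" where
  "locally_R_contractible Y \<longleftrightarrow>
     (\<forall>y0\<in>Y. \<exists>U H. openin (top_of_set Y) U \<and> y0 \<in> U \<and>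
        continuous_on (U \<times> {0..1::real}) H \<and> H ` (U \<times> {0..1}) \<subseteq> U \<and>
        (\<forall>t\<in>{0..1}. H (y0, t) = y0) \<and>
        (\<forall>y\<in>U. H (y, 0) = y0 \<and> H (y, 1) = y) \<and>
        (\<forall>y\<in>U. rectifiable_path (\<lambda>t. H (y, t))))"

definition lower_scalar_deriv :: "('a::metric_space \<Rightarrow> 'b::metric_space) \<Rightarrow> 'a \<Rightarrow> ereal" where
  "lower_scalar_deriv f x = Liminf (at x) (\<lambda>z. ereal (dist (f z) (f x) / dist z x))"

end

theory Submission
  imports Defs
begin



lemma lh_isCont:
  fixes f :: "'a::metric_space \<Rightarrow> 'b::metric_space"
  assumes "local_homeomorphism f" shows "isCont f x"
proof -
  obtain U V g where "x \<in> U" "open U" "open V" "homeomorphism U V f g"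
    using assms unfolding local_homeomorphism_def by blast
  then show ?thesis using homeomorphism_cont1 continuous_on_eq_continuous_at by blast
qed

lemma lh_continuous:
  fixes f :: "'a::metric_space \<Rightarrow> 'b::metric_space"
  assumes "local_homeomorphism f" shows "continuous_on S f"
  using lh_isCont[OF assms] by (simp add: continuous_at_imp_continuous_on)

lemma lift_unique:
  fixes f :: "'a::metric_space \<Rightarrow> 'b::metric_space"
  assumes lh: "local_homeomorphism f"
    and S: "connected S" and c1: "continuous_on S c1" and c2: "continuous_on S c2"
    and eq: "\<And>t. t \<in> S \<Longrightarrow> f (c1 t) = f (c2 t)" and a: "a \<in> S" "c1 a = c2 a"
    and t: "t \<in> S"
  shows "c1 t = c2 t"
proof -
  let ?E = "{t\<in>S. c1 t = c2 t}"
  have "closedin (top_of_set S) {t\<in>S. dist (c1 t) (c2 t) = 0}"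
    by (intro continuous_closedin_preimage_constant continuous_on_dist c1 c2)
  then have clo: "closedin (top_of_set S) ?E" by simp
  have ope: "openin (top_of_set S) ?E"
  proof (subst openin_subopen, intro ballI)
    fix u assume u: "u \<in> ?E"
    obtain A B g where A: "c1 u \<in> A" "open A" "open B" "homeomorphism A B f g"
      using lh unfolding local_homeomorphism_def by blast
    let ?T = "(S \<inter> c1 -` A) \<inter> (S \<inter> c2 -` A)"
    have "openin (top_of_set S) ?T"
      by (intro openin_Int continuous_openin_preimage_gen c1 c2 A)
    moreover have "u \<in> ?T" using u A by auto
    moreover have "?T \<subseteq> ?E"
    proof
      fix v assume v: "v \<in> ?T"
      then have "g (f (c1 v)) = g (f (c2 v))" using eq by auto
      then show "v \<in> ?E" using v homeomorphism_apply1[OF A(4)] by auto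
    qed
    ultimately show "\<exists>T. openin (top_of_set S) T \<and> u \<in> T \<and> T \<subseteq> ?E" by blast
  qed
  have "?E = {} \<or> ?E = S"
    using connected_clopen[THEN iffD1, OF S, rule_format, OF conjI[OF ope clo]] .
  then have "?E = S" using a by auto
  then show ?thesis using t by blast
qed

definition psums :: "(real \<Rightarrow> 'a::metric_space) \<Rightarrow> real \<Rightarrow> real set" where
  "psums p v = {(\<Sum>i<n. dist (p (t i)) (p (t (Suc i)))) | t n.
                  t 0 = 0 \<and> t n = v \<and> (\<forall>i<n. t i \<le> t (Suc i))}"

definition var0 :: "(real \<Rightarrow> 'a::metric_space) \<Rightarrow> real \<Rightarrow> real" where
  "var0 p v = Sup (psums p v)"

lemma rect_psums: "rectifiable_path p \<longleftrightarrow> bdd_above (psums p 1)"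
  unfolding rectifiable_path_def psums_def by simp

lemma psums_ext:
  assumes "e \<in> psums p u" "u \<le> v"
  shows "e + dist (p u) (p v) \<in> psums p v"
proof -
  obtain t n where tn: "e = (\<Sum>i<n. dist (p (t i)) (p (t (Suc i))))" "t 0 = 0" "t n = u"
    "\<forall>i<n. t i \<le> t (Suc i)"
    using assms(1) unfolding psums_def by blast
  define t' where "t' i = (if i \<le> n then t i else v)" for i
  have "(\<Sum>i<Suc n. dist (p (t' i)) (p (t' (Suc i)))) = e + dist (p u) (p v)"
    using tn by (simp add: t'_def)
  moreover have "t' 0 = 0" "t' (Suc n) = v" using tn by (auto simp: t'_def)
  moreover have "\<forall>i<Suc n. t' i \<le> t' (Suc i)"
    using tn assms(2) by (auto simp: t'_def less_Suc_eq)
  ultimately show ?thesis unfolding psums_def mem_Collect_eq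
    by (intro exI[of _ t'] exI[of _ "Suc n"]) auto
qed

lemma psums_nonempty:
  assumes "0 \<le> v" shows "psums p v \<noteq> {}"
proof -
  define t where "t i = (if i = 0 then 0 else v)" for i :: nat
  have h: "t 0 = 0" "t (Suc 0) = v" "\<forall>i<Suc 0. t i \<le> t (Suc i)" using assms by (auto simp: t_def)
  have "(\<Sum>i<Suc 0. dist (p (t i)) (p (t (Suc i)))) \<in> psums p v"
    unfolding psums_def mem_Collect_eq by (rule exI[of _ t], rule exI[of _ "Suc 0"]) (use h in blast)
  then show ?thesis by blast
qed

lemma psums_bdd:
  assumes "rectifiable_path p" "v \<le> 1" shows "bdd_above (psums p v)"
proof -
  obtain M where M: "\<And>x. x \<in> psums p 1 \<Longrightarrow> x \<le> M"
    using assms(1) unfolding rect_psums bdd_above_def by blast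
  show ?thesis
  proof (rule bdd_aboveI)
    fix e assume "e \<in> psums p v"
    then have "e + dist (p v) (p 1) \<le> M" using M psums_ext assms(2) by blast
    then show "e \<le> M" using zero_le_dist[of "p v" "p 1"] by linarith
  qed
qed

lemma var0_step:
  assumes "rectifiable_path p" "0 \<le> u" "u \<le> v" "v \<le> 1"
  shows "var0 p u + dist (p u) (p v) \<le> var0 p v"
proof -
  have "e \<le> var0 p v - dist (p u) (p v)" if "e \<in> psums p u" for e
  proof -
    have "e + dist (p u) (p v) \<le> var0 p v"
      unfolding var0_def
      by (rule cSup_upper[OF psums_ext[OF that assms(3)] psums_bdd[OF assms(1,4)]])
    then show ?thesis by linarith
  qed
  then have "var0 p u \<le> var0 p v - dist (p u) (p v)"
    unfolding var0_def[of p u] by (intro cSup_least psums_nonempty assms(2)) auto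
  then show ?thesis by linarith
qed

lemma var0_mono:
  assumes "rectifiable_path p" "0 \<le> u" "u \<le> v" "v \<le> 1"
  shows "var0 p u \<le> var0 p v"
  using var0_step[OF assms] zero_le_dist[of "p u" "p v"] by linarith





locale expset =
  fixes f :: "'a::metric_space \<Rightarrow> 'b::metric_space" and \<beta> :: real
  assumes lh: "local_homeomorphism f" and cpl: "complete (UNIV :: 'a set)" and bpos: "\<beta> > 0"
    and expand: "\<And>x. \<exists>r>0. \<forall>z. dist z x < r \<longrightarrow> \<beta> * dist z x \<le> dist (f z) (f x)"
begin

lemma chord:
  assumes rect: "rectifiable_path \<gamma>" and cc: "continuous_on {0..b} c" and b1: "b \<le> 1"
    and lift: "\<forall>t\<in>{0..b}. f (c t) = \<gamma> t"
    and st: "0 \<le> s" "s \<le> t" "t \<le> b"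
  shows "\<beta> * dist (c s) (c t) \<le> var0 \<gamma> t - var0 \<gamma> s"
proof -
  define P where "P v \<longleftrightarrow> \<beta> * dist (c s) (c v) \<le> var0 \<gamma> v - var0 \<gamma> s" for v
  define A where "A = {u\<in>{s..b}. \<forall>v\<in>{s..u}. P v}"
  have sA: "s \<in> A" unfolding A_def P_def using st by auto
  have bddA: "bdd_above A" unfolding A_def by (auto intro: bdd_aboveI[of _ b])
  define \<tau> where "\<tau> = Sup A"
  have s\<tau>: "s \<le> \<tau>" unfolding \<tau>_def using cSup_upper[OF sA bddA] .
  have \<tau>b: "\<tau> \<le> b" unfolding \<tau>_def using sA by (intro cSup_least) (auto simp: A_def)
  have below: "P v" if "s \<le> v" "v < \<tau>" for v
  proof -
    obtain u where "u \<in> A" "v < u" using less_cSupE[of v A] \<open>v<\<tau>\<close> \<tau>_def sA by blast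
    then show ?thesis unfolding A_def using that by auto
  qed
  have P\<tau>: "P \<tau>"
  proof (cases "s = \<tau>")
    case True then show ?thesis by (simp add: P_def)
  next
    case False
    then have s\<tau>': "s < \<tau>" using s\<tau> by simp
    have "continuous (at \<tau> within {0..b}) c"
      proof -
      have "\<tau> \<in> {0..b}" using \<tau>b s\<tau> st by auto
      then show ?thesis using cc continuous_on_eq_continuous_within by blast
    qed
    then have "continuous (at \<tau> within {s..\<tau>}) c"
      by (rule continuous_within_subset) (use st \<tau>b in auto)
    then have "(c \<longlongrightarrow> c \<tau>) (at_left \<tau>)"
      using at_within_Icc_at_left[OF s\<tau>'] by (simp add: continuous_within)
    then have lim: "((\<lambda>v. \<beta> * dist (c s) (c v)) \<longlongrightarrow> \<beta> * dist (c s) (c \<tau>)) (at_left \<tau>)"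
      by (intro tendsto_intros)
    have ev: "\<forall>\<^sub>F v in at_left \<tau>. \<beta> * dist (c s) (c v) \<le> var0 \<gamma> \<tau> - var0 \<gamma> s"
    proof -
      have "\<forall>\<^sub>F v in at_left \<tau>. v \<in> {s<..<\<tau>}"
        using eventually_at_left_real[OF s\<tau>'] .
      then show ?thesis
      proof eventually_elim
        case (elim v)
        then have "P v" using below by auto
        moreover have "var0 \<gamma> v \<le> var0 \<gamma> \<tau>"
          using elim st \<tau>b b1 by (intro var0_mono rect) auto
        ultimately show ?case unfolding P_def by linarith
      qed
    qed
    have "\<beta> * dist (c s) (c \<tau>) \<le> var0 \<gamma> \<tau> - var0 \<gamma> s"
      by (rule tendsto_upperbound[OF lim ev]) simp
    then show ?thesis unfolding P_def .
  qed
  have \<tau>A: "\<tau> \<in> A" unfolding A_def using s\<tau> \<tau>b below P\<tau>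
    by (auto simp: order.order_iff_strict)
  have "\<tau> = b"
  proof (rule ccontr)
    assume "\<tau> \<noteq> b"
    then have \<tau>b': "\<tau> < b" using \<tau>b by simp
    obtain r where r: "r>0" "\<forall>z. dist z (c \<tau>) < r \<longrightarrow> \<beta> * dist z (c \<tau>) \<le> dist (f z) (f (c \<tau>))"
      using expand by blast
    have "continuous (at \<tau> within {0..b}) c"
      proof -
      have "\<tau> \<in> {0..b}" using \<tau>b s\<tau> st by auto
      then show ?thesis using cc continuous_on_eq_continuous_within by blast
    qed
    then obtain d where d: "d>0" "\<forall>v\<in>{0..b}. dist v \<tau> < d \<longrightarrow> dist (c v) (c \<tau>) < r"
      using r(1) unfolding continuous_within_eps_delta by blast
    define u where "u = min (\<tau> + d/2) b"
    have "u \<in> A" unfolding A_def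
    proof (intro CollectI conjI ballI)
      show "u \<in> {s..b}" using s\<tau> \<tau>b' d by (auto simp: u_def)
    next
      fix v assume v: "v \<in> {s..u}"
      show "P v"
      proof (cases "v \<le> \<tau>")
        case True then show ?thesis using \<tau>A v unfolding A_def by auto
      next
        case False
        then have v0: "\<tau> < v" "v \<le> b" "dist v \<tau> < d" using v d by (auto simp: u_def dist_real_def)
        have "dist (c v) (c \<tau>) < r" using d v0 s\<tau> st by auto
        then have "\<beta> * dist (c v) (c \<tau>) \<le> dist (f (c v)) (f (c \<tau>))" using r by blast
        also have "\<dots> = dist (\<gamma> \<tau>) (\<gamma> v)" using lift v0 s\<tau> st by (simp add: dist_commute)
        also have "\<dots> \<le> var0 \<gamma> v - var0 \<gamma> \<tau>"
          using var0_step[OF rect, of \<tau> v] v0 s\<tau> st b1 by linarith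
        finally have 1: "\<beta> * dist (c \<tau>) (c v) \<le> var0 \<gamma> v - var0 \<gamma> \<tau>" by (simp add: dist_commute)
        have 2: "\<beta> * dist (c s) (c \<tau>) \<le> var0 \<gamma> \<tau> - var0 \<gamma> s" using P\<tau> unfolding P_def .
        have "\<beta> * dist (c s) (c v) \<le> \<beta> * (dist (c s) (c \<tau>) + dist (c \<tau>) (c v))"
          using bpos dist_triangle by (intro mult_left_mono) auto
        then show ?thesis unfolding P_def using 1 2 by (simp add: algebra_simps)
      qed
    qed
    then have "u \<le> \<tau>" unfolding \<tau>_def using bddA by (rule cSup_upper)
    then show False using \<tau>b' d by (auto simp: u_def)
  qed
  then show ?thesis using \<tau>A st unfolding A_def P_def by auto
qed

end




context expset begin

lemma lift_exists:
  assumes gc: "continuous_on {0..1} \<gamma>" and rect: "rectifiable_path \<gamma>" and x0: "f x0 = \<gamma> 0"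
  shows "\<exists>c. continuous_on {0..1} c \<and> c 0 = x0 \<and> (\<forall>t\<in>{0..1}. f (c t) = \<gamma> t)"
proof -
  define LO where "LO b c \<longleftrightarrow> continuous_on {0..b} c \<and> c 0 = x0 \<and> (\<forall>t\<in>{0..b}. f (c t) = \<gamma> t)"
    for b c
  have restr: "LO b c" if "LO b' c" "0 \<le> b" "b \<le> b'" for b b' c
  proof -
    have "continuous_on {0..b'} c" using that(1) unfolding LO_def by blast
    then have "continuous_on {0..b} c"
      by (rule continuous_on_subset) (use that(3) in simp)
    then show ?thesis using that unfolding LO_def by auto
  qed
  have uniq: "c1 t = c2 t" if "LO b c1" "LO b c2" "t \<in> {0..b}" for b c1 c2 t
  proof -
    have "0 \<le> b" using that by auto
    then show ?thesis
      using lift_unique[OF lh connected_Icc[of 0 b], of c1 c2 0 t] that unfolding LO_def by auto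
  qed
  define S where "S = {b\<in>{0..1}. \<exists>c. LO b c}"
  have LO0: "LO 0 (\<lambda>_. x0)" unfolding LO_def using x0 by auto
  then have S0: "0 \<in> S" unfolding S_def by auto
  have bddS: "bdd_above S" unfolding S_def by (auto intro: bdd_aboveI[of _ 1])
  define T where "T = Sup S"
  have T0: "0 \<le> T" unfolding T_def using cSup_upper[OF S0 bddS] .
  have T1: "T \<le> 1" unfolding T_def by (rule cSup_least) (use S0 in blast, auto simp: S_def)
  have below: "\<exists>c. LO b c" if "0 \<le> b" "b < T" for b
  proof -
    obtain u where "u \<in> S" "b < u" using less_cSupE[of b S] \<open>b<T\<close> T_def S0 by blast
    then obtain c where "LO u c" unfolding S_def by blast
    then have "LO b c" using restr[of u c b] that \<open>b < u\<close> by simp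
    then show ?thesis by blast
  qed
  have TS: "\<exists>c. LO T c"
  proof (cases "T = 0")
    case True then show ?thesis using LO0 by auto
  next
    case False
    then have Tpos: "0 < T" using T0 by simp
    define C where "C t = (SOME c. LO t c) t" for t
    have Cb: "LO b C" if bT: "0 \<le> b" "b < T" for b
    proof -
      obtain cb where cb: "LO b cb" using below bT by blast
      have eq: "C t = cb t" if "t \<in> {0..b}" for t
      proof -
        have "LO t cb" using restr[OF cb] that by auto
        then have "LO t (SOME c. LO t c)" by (rule someI[where P="LO t"])
        then have "(SOME c. LO t c) t = cb t" using \<open>LO t cb\<close> uniq that by auto
        then show ?thesis by (simp add: C_def)
      qed
      have 1: "continuous_on {0..b} C"
        by (rule continuous_on_eq[of _ cb]) (use cb eq in \<open>auto simp: LO_def\<close>)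
      have 2: "C 0 = x0" using eq[of 0] cb bT by (simp add: LO_def)
      have 3: "\<forall>t\<in>{0..b}. f (C t) = \<gamma> t" using eq cb by (simp add: LO_def)
      show ?thesis using 1 2 3 unfolding LO_def by blast
    qed
    have est: "\<beta> * dist (C s) (C t) \<le> var0 \<gamma> t - var0 \<gamma> s" if "0 \<le> s" "s \<le> t" "t < T" for s t
    proof -
      have "LO t C" using Cb that by auto
      then show ?thesis using that T1 unfolding LO_def
        by (intro chord[OF rect, of t C]) auto
    qed
    define L where "L = Sup (var0 \<gamma> ` {0..<T})"
    have bddV: "bdd_above (var0 \<gamma> ` {0..<T})"
      using T1 by (intro bdd_aboveI[of _ "var0 \<gamma> 1"]) (auto intro: var0_mono[OF rect])
    have VL: "var0 \<gamma> t \<le> L" if "t \<in> {0..<T}" for t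
      unfolding L_def using that bddV by (intro cSup_upper) auto
    have cauchy': "\<exists>t0\<in>{0..<T}. \<forall>s t. t0 \<le> s \<longrightarrow> s < T \<longrightarrow> t0 \<le> t \<longrightarrow> t < T \<longrightarrow> dist (C s) (C t) < \<epsilon>"
      if "\<epsilon> > 0" for \<epsilon>
    proof -
      have "L - \<beta> * \<epsilon> < L" using that bpos by simp
      then have lt: "L - \<beta> * \<epsilon> < Sup (var0 \<gamma> ` {0..<T})" unfolding L_def .
      have ne: "var0 \<gamma> ` {0..<T} \<noteq> {}" using Tpos by auto
      obtain v where v: "v \<in> var0 \<gamma> ` {0..<T}" "L - \<beta> * \<epsilon> < v"
        using less_cSupE[OF lt ne] by blast
      then obtain t0 where t0: "t0 \<in> {0..<T}" "L - \<beta> * \<epsilon> < var0 \<gamma> t0" by blast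
      have key: "dist (C s) (C t) < \<epsilon>" if "t0 \<le> s" "s \<le> t" "t < T" for s t
      proof -
        have "\<beta> * dist (C s) (C t) \<le> var0 \<gamma> t - var0 \<gamma> s" using est that t0 by auto
        also have "\<dots> \<le> L - var0 \<gamma> t0"
          using VL[of t] var0_mono[OF rect, of t0 s] that t0 T1 by auto
        also have "\<dots> < \<beta> * \<epsilon>" using t0 by simp
        finally show ?thesis using bpos by simp
      qed
      show ?thesis
      proof (intro bexI[OF _ t0(1)] allI impI)
        fix s t assume "t0 \<le> s" "s < T" "t0 \<le> t" "t < T"
        then show "dist (C s) (C t) < \<epsilon>"
          using key[of s t] key[of t s] by (cases "s \<le> t") (auto simp: dist_commute)
      qed
    qed
    define q where "q n = T - T / real (n + 2)" for n :: nat
    have q0: "q n \<in> {0..<T}" for n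
    proof -
      have "T / real (n+2) \<le> T" using Tpos by (simp add: divide_le_eq)
      moreover have "0 < T / real (n+2)" using Tpos by simp
      ultimately show ?thesis by (auto simp: q_def)
    qed
    have qlim: "q \<longlonglongrightarrow> T"
    proof -
      have "(\<lambda>n. T / real (n + 2)) \<longlonglongrightarrow> 0"
        using LIMSEQ_ignore_initial_segment[OF lim_const_over_n[of T], of 2] by simp
      then have "(\<lambda>n. T - T / real (n + 2)) \<longlonglongrightarrow> T - 0" by (intro tendsto_intros)
      then show ?thesis by (simp add: q_def[abs_def])
    qed
    have "Cauchy (\<lambda>n. C (q n))"
    proof (rule metric_CauchyI)
      fix \<epsilon> :: real assume "\<epsilon> > 0"
      then obtain t0 where t0: "t0 \<in> {0..<T}"
        "\<forall>s t. t0 \<le> s \<longrightarrow> s < T \<longrightarrow> t0 \<le> t \<longrightarrow> t < T \<longrightarrow> dist (C s) (C t) < \<epsilon>"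
        using cauchy' by blast
      have "\<forall>\<^sub>F n in sequentially. t0 < q n" using qlim t0 by (intro order_tendstoD) auto
      then obtain M where M: "\<And>n. n \<ge> M \<Longrightarrow> t0 < q n" unfolding eventually_sequentially by blast
      show "\<exists>M. \<forall>m\<ge>M. \<forall>n\<ge>M. dist (C (q m)) (C (q n)) < \<epsilon>"
      proof (intro exI[of _ M] allI impI)
        fix m n assume "M \<le> m" "M \<le> n"
        then show "dist (C (q m)) (C (q n)) < \<epsilon>"
          using M[of m] M[of n] t0(2) q0[of m] q0[of n] by auto
      qed
    qed
    then obtain p where p: "(\<lambda>n. C (q n)) \<longlonglongrightarrow> p"
      using cpl unfolding complete_def by blast
    have near: "\<exists>t0\<in>{0..<T}. \<forall>t. t0 \<le> t \<longrightarrow> t < T \<longrightarrow> dist (C t) p \<le> \<epsilon>" if epos: "\<epsilon> > 0" for \<epsilon>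
    proof -
      obtain t0 where t0: "t0 \<in> {0..<T}"
        "\<forall>s t. t0 \<le> s \<longrightarrow> s < T \<longrightarrow> t0 \<le> t \<longrightarrow> t < T \<longrightarrow> dist (C s) (C t) < \<epsilon>"
        using cauchy' epos by blast
      have "\<forall>\<^sub>F n in sequentially. t0 < q n" using qlim t0 by (intro order_tendstoD) auto
      show ?thesis
      proof (intro bexI[OF _ t0(1)] allI impI)
        fix t assume t: "t0 \<le> t" "t < T"
        have lim: "(\<lambda>n. dist (C t) (C (q n))) \<longlonglongrightarrow> dist (C t) p"
          by (intro tendsto_intros p)
        have "\<forall>\<^sub>F n in sequentially. dist (C t) (C (q n)) \<le> \<epsilon>"
          using \<open>\<forall>\<^sub>F n in sequentially. t0 < q n\<close>
        proof eventually_elim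
          case (elim n)
          then have "dist (C t) (C (q n)) < \<epsilon>" using t0(2) t q0[of n] by auto
          then show ?case by simp
        qed
        then show "dist (C t) p \<le> \<epsilon>" by (rule tendsto_upperbound[OF lim]) simp
      qed
    qed
    have fp: "f p = \<gamma> T"
    proof -
      have l1: "(\<lambda>n. f (C (q n))) \<longlonglongrightarrow> f p"
        using lh_isCont[OF lh, of p] p by (rule isCont_tendsto_compose)
      have "(\<lambda>n. \<gamma> (q n)) \<longlonglongrightarrow> \<gamma> T"
      proof (rule continuous_on_tendsto_compose[OF gc qlim])
        show "T \<in> {0..1}" using T0 T1 by auto
        have "q n \<in> {0..1}" for n using q0[of n] T1 by auto
        then show "\<forall>\<^sub>F n in sequentially. q n \<in> {0..1}" by (intro always_eventually) auto
      qed
      moreover have "f (C (q n)) = \<gamma> (q n)" for n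
        using Cb[of "q n"] q0[of n] unfolding LO_def by auto
      ultimately show ?thesis using l1 LIMSEQ_unique by auto
    qed
    define c' where "c' t = (if t < T then C t else p)" for t
    have "LO T c'"
      unfolding LO_def
    proof (intro conjI ballI)
      show "c' 0 = x0" using Cb[of 0] Tpos unfolding LO_def c'_def by auto
    next
      fix t assume t: "t \<in> {0..T}"
      show "f (c' t) = \<gamma> t"
      proof (cases "t < T")
        case True then show ?thesis using Cb[of t] t unfolding LO_def c'_def by auto
      next
        case False then show ?thesis using fp t unfolding c'_def by auto
      qed
    next
      show "continuous_on {0..T} c'"
      proof (subst continuous_on_eq_continuous_within, intro ballI)
        fix t assume t: "t \<in> {0..T}"
        show "continuous (at t within {0..T}) c'"
        proof (cases "t < T")
          case True
          define b where "b = (t + T) / 2"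
          have b: "0 \<le> b" "b < T" "t < b" using True t by (auto simp: b_def)
          have "continuous (at t within {0..b}) C"
            using Cb[OF b(1,2)] t b unfolding LO_def
            by (simp add: continuous_on_eq_continuous_within)
          show ?thesis unfolding continuous_within_eps_delta
          proof (intro allI impI)
            fix e :: real assume "e > 0"
            then obtain d where d: "d > 0" "\<forall>x'\<in>{0..b}. dist x' t < d \<longrightarrow> dist (C x') (C t) < e"
              using \<open>continuous (at t within {0..b}) C\<close> unfolding continuous_within_eps_delta by blast
            show "\<exists>d>0. \<forall>x'\<in>{0..T}. dist x' t < d \<longrightarrow> dist (c' x') (c' t) < e"
            proof (intro exI[of _ "min d (b - t)"] conjI ballI impI)
              show "0 < min d (b - t)" using d b by auto
            next
              fix x' assume x': "x' \<in> {0..T}" "dist x' t < min d (b - t)"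
              then have "x' < b" by (auto simp: dist_real_def)
              then show "dist (c' x') (c' t) < e" using d x' b True by (auto simp: c'_def)
            qed
          qed
        next
          case False
          then have tT: "t = T" using t by auto
          show ?thesis unfolding continuous_within_eps_delta
          proof (intro allI impI)
            fix e :: real assume "e > 0"
            then obtain t0 where t0: "t0 \<in> {0..<T}" "\<forall>t. t0 \<le> t \<longrightarrow> t < T \<longrightarrow> dist (C t) p \<le> e/2"
              using near[of "e/2"] by auto
            show "\<exists>d>0. \<forall>x'\<in>{0..T}. dist x' t < d \<longrightarrow> dist (c' x') (c' t) < e"
            proof (intro exI[of _ "T - t0"] conjI ballI impI)
              show "0 < T - t0" using t0 by auto
            next
              fix x' assume x': "x' \<in> {0..T}" "dist x' t < T - t0"
              show "dist (c' x') (c' t) < e"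
              proof (cases "x' < T")
                case True
                then have "t0 \<le> x'" using x' tT by (auto simp: dist_real_def)
                then show ?thesis using t0 True tT \<open>e>0\<close> by (auto simp: c'_def)
              next
                case False then show ?thesis using tT \<open>e>0\<close> by (auto simp: c'_def)
              qed
            qed
          qed
        qed
      qed
    qed
    then show ?thesis by blast
  qed
  have "T = 1"
  proof (rule ccontr)
    assume "T \<noteq> 1"
    then have T1': "T < 1" using T1 by simp
    obtain c where c: "LO T c" using TS by blast
    obtain A B g where AB: "c T \<in> A" "open A" "open B" "homeomorphism A B f g"
      using lh unfolding local_homeomorphism_def by blast
    have fcT: "f (c T) = \<gamma> T" using c T0 unfolding LO_def by auto
    have "f (c T) \<in> B" using AB(1) AB(4) unfolding homeomorphism_def by blast
    then have gB: "\<gamma> T \<in> B" using fcT by simp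
    obtain r where r: "r > 0" "ball (\<gamma> T) r \<subseteq> B" using AB(3) gB open_contains_ball by blast
    have "continuous (at T within {0..1}) \<gamma>" using gc T0 T1
      by (simp add: continuous_on_eq_continuous_within)
    then obtain d where d: "d>0" "\<forall>t\<in>{0..1}. dist t T < d \<longrightarrow> dist (\<gamma> t) (\<gamma> T) < r"
      using r(1) unfolding continuous_within_eps_delta by blast
    define b' where "b' = min (T + d/2) 1"
    have b': "T < b'" "b' \<le> 1" using d T1' by (auto simp: b'_def)
    have inB: "\<gamma> t \<in> B" if "t \<in> {T..b'}" for t
    proof -
      have "dist t T < d" using that d by (auto simp: b'_def dist_real_def)
      then have "dist (\<gamma> t) (\<gamma> T) < r" using d that T0 b' by auto
      then show ?thesis using r by (auto simp: dist_commute)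
    qed
    define c2 where "c2 t = (if t \<le> T then c t else g (\<gamma> t))" for t
    have "LO b' c2"
      unfolding LO_def
    proof (intro conjI ballI)
      show "c2 0 = x0" using c T0 unfolding LO_def c2_def by auto
    next
      fix t assume t: "t \<in> {0..b'}"
      show "f (c2 t) = \<gamma> t"
      proof (cases "t \<le> T")
        case True then show ?thesis using c t unfolding LO_def c2_def by auto
      next
        case False then show ?thesis using inB[of t] t homeomorphism_apply2[OF AB(4)]
          unfolding c2_def by auto
      qed
    next
      have "continuous_on ({0..T} \<union> {T..b'}) c2"
        unfolding c2_def
      proof (rule continuous_on_cases)
        show "continuous_on {0..T} c" using c unfolding LO_def by auto
        show "continuous_on {T..b'} (\<lambda>t. g (\<gamma> t))"
        proof (rule continuous_on_compose2[of B g])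
          show "continuous_on B g" using AB(4) homeomorphism_cont2 by blast
          show "continuous_on {T..b'} \<gamma>" by (rule continuous_on_subset[OF gc]) (use T0 b' in auto)
          show "\<gamma> ` {T..b'} \<subseteq> B" using inB by auto
        qed
        show "\<forall>x. x \<in> {0..T} \<and> \<not> x \<le> T \<or> x \<in> {T..b'} \<and> x \<le> T \<longrightarrow> c x = g (\<gamma> x)"
        proof (intro allI impI)
          fix x assume "x \<in> {0..T} \<and> \<not> x \<le> T \<or> x \<in> {T..b'} \<and> x \<le> T"
          then have "x = T" by auto
          then show "c x = g (\<gamma> x)" using fcT homeomorphism_apply1[OF AB(4) AB(1)] by simp
        qed
      qed auto
      moreover have "{0..T} \<union> {T..b'} = {0..b'}" using T0 b' by auto
      ultimately show "continuous_on {0..b'} c2" by simp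
    qed
    then have "b' \<in> S" unfolding S_def using b' T0 by auto
    then have "b' \<le> T" unfolding T_def using bddS by (rule cSup_upper)
    then show False using b' by simp
  qed
  moreover obtain c where "LO T c" using TS by blast
  ultimately have "LO 1 c" by simp
  then show ?thesis unfolding LO_def by blast
qed

end




context expset begin

lemma param_cont:
  fixes H :: "'b \<times> real \<Rightarrow> 'b" and K :: "'b \<Rightarrow> real \<Rightarrow> 'a"
  assumes Hc: "continuous_on (U \<times> {0..1}) H"
    and K: "\<And>y. y \<in> U \<Longrightarrow> continuous_on {0..1} (K y) \<and> K y 0 = x0 \<and> (\<forall>t\<in>{0..1}. f (K y t) = H (y,t))"
    and y1: "y1 \<in> U"
  shows "\<exists>N. open N \<and> y1 \<in> N \<and> continuous_on ((N \<inter> U) \<times> {0..1}) (\<lambda>z. K (fst z) (snd z))"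
proof -
  define G where "G = (\<lambda>z. K (fst z) (snd z))"
  define A where "A = {\<tau>\<in>{0..1}. \<exists>N. open N \<and> y1 \<in> N \<and> continuous_on ((N \<inter> U) \<times> {0..\<tau>}) G}"
  have A0: "0 \<in> A"
  proof -
    have "continuous_on ((UNIV \<inter> U) \<times> {0..0}) G"
      by (rule continuous_on_eq[OF continuous_on_const[of _ x0]]) (auto simp: G_def K)
    then show ?thesis unfolding A_def by auto
  qed
  have bddA: "bdd_above A" unfolding A_def by (auto intro: bdd_aboveI[of _ 1])
  define \<tau> where "\<tau> = Sup A"
  have \<tau>0: "0 \<le> \<tau>" unfolding \<tau>_def using cSup_upper[OF A0 bddA] .
  have \<tau>1: "\<tau> \<le> 1" unfolding \<tau>_def by (rule cSup_least) (use A0 in blast, auto simp: A_def)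
  have \<tau>I: "\<tau> \<in> {0..1}" using \<tau>0 \<tau>1 by auto
  obtain Ach B g where AB: "K y1 \<tau> \<in> Ach" "open Ach" "open B" "homeomorphism Ach B f g"
    using lh unfolding local_homeomorphism_def by blast
  have HB: "H (y1,\<tau>) \<in> B"
  proof -
    have "f (K y1 \<tau>) = H (y1,\<tau>)" using K[OF y1] \<tau>I by auto
    moreover have "f (K y1 \<tau>) \<in> B" using AB unfolding homeomorphism_def by auto
    ultimately show ?thesis by simp
  qed
  obtain r1 where r1: "r1>0" "ball (K y1 \<tau>) r1 \<subseteq> Ach" using AB open_contains_ball by blast
  have "continuous (at \<tau> within {0..1}) (K y1)"
    using K[OF y1] \<tau>I continuous_on_eq_continuous_within by blast
  then obtain d2 where d2: "d2>0" "\<forall>t\<in>{0..1}. dist t \<tau> < d2 \<longrightarrow> dist (K y1 t) (K y1 \<tau>) < r1"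
    using r1(1) unfolding continuous_within_eps_delta by blast
  obtain r2 where r2: "r2>0" "ball (H (y1,\<tau>)) r2 \<subseteq> B" using AB(3) HB open_contains_ball by blast
  have "continuous (at (y1,\<tau>) within (U \<times> {0..1})) H"
    using Hc y1 \<tau>I continuous_on_eq_continuous_within by blast
  then obtain d3 where d3: "d3>0" "\<forall>z\<in>U \<times> {0..1}. dist z (y1,\<tau>) < d3 \<longrightarrow> dist (H z) (H (y1,\<tau>)) < r2"
    using r2(1) unfolding continuous_within_eps_delta by blast
  define \<delta> where "\<delta> = min d2 d3"
  have \<delta>: "\<delta> > 0" "\<delta> \<le> d2" "\<delta> \<le> d3" using d2 d3 by (auto simp: \<delta>_def)
  obtain \<tau>0 where \<tau>0A: "\<tau>0 \<in> A" "\<tau> - \<delta>/2 < \<tau>0"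
    using less_cSupE[of "\<tau> - \<delta>/2" A] \<delta> A0 unfolding \<tau>_def by force
  have \<tau>0\<tau>: "\<tau>0 \<le> \<tau>" unfolding \<tau>_def using cSup_upper[OF \<tau>0A(1) bddA] .
  have \<tau>00: "0 \<le> \<tau>0" using \<tau>0A unfolding A_def by auto
  obtain N0 where N0: "open N0" "y1 \<in> N0" "continuous_on ((N0 \<inter> U) \<times> {0..\<tau>0}) G"
    using \<tau>0A unfolding A_def by auto
  have KA: "K y1 \<tau>0 \<in> Ach"
  proof -
    have "dist \<tau>0 \<tau> < d2" using \<tau>0A \<tau>0\<tau> \<delta> by (auto simp: dist_real_def)
    then have "dist (K y1 \<tau>0) (K y1 \<tau>) < r1" using d2 \<tau>00 \<tau>0\<tau> \<tau>1 by auto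
    then show ?thesis using r1 by (auto simp: dist_commute)
  qed
  have "continuous_on (N0 \<inter> U) (\<lambda>y. G (y, \<tau>0))"
    by (rule continuous_on_compose2[OF N0(3)]) (auto intro!: continuous_intros simp: \<tau>00)
  then have "continuous_on (N0 \<inter> U) (\<lambda>y. K y \<tau>0)" by (simp add: G_def)
  then have "openin (top_of_set (N0 \<inter> U)) ((N0 \<inter> U) \<inter> (\<lambda>y. K y \<tau>0) -` Ach)"
    using AB(2) by (rule continuous_openin_preimage_gen)
  then obtain W where W: "open W" "(N0 \<inter> U) \<inter> (\<lambda>y. K y \<tau>0) -` Ach = (N0 \<inter> U) \<inter> W"
    unfolding openin_open by auto
  have y1W: "y1 \<in> W" using W(2) N0 y1 KA by blast
  define N where "N = N0 \<inter> W \<inter> ball y1 (\<delta>/2)"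
  have N: "open N" "y1 \<in> N" using N0 W y1W \<delta> by (auto simp: N_def)
  have Nprops: "y \<in> N0" "y \<in> U" "K y \<tau>0 \<in> Ach" "dist y y1 < \<delta>/2" if "y \<in> N \<inter> U" for y
    using that W(2) by (auto simp: N_def dist_commute)
  define \<tau>' where "\<tau>' = min (\<tau> + \<delta>/2) 1"
  have \<tau>'1: "\<tau>' \<le> 1" "\<tau>0 \<le> \<tau>'" using \<tau>0\<tau> \<tau>1 \<delta> \<tau>0A by (auto simp: \<tau>'_def)
  have inB: "H (y,t) \<in> B" if y: "y \<in> N \<inter> U" and t: "t \<in> {\<tau>0..\<tau>'}" for y t
  proof -
    have dt: "dist t \<tau> \<le> \<delta>/2" using t \<tau>0A \<tau>0\<tau> by (auto simp: \<tau>'_def dist_real_def split: abs_split)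
    have "dist (y,t) (y1,\<tau>) \<le> dist y y1 + dist t \<tau>"
      unfolding dist_Pair_Pair by (rule sqrt_sum_squares_le_sum) auto
    also have "\<dots> < d3" using Nprops[OF y] dt \<delta> by linarith
    finally have "dist (H (y,t)) (H (y1,\<tau>)) < r2"
      using d3 Nprops[OF y] t \<tau>00 \<tau>'1 by auto
    then show ?thesis using r2 by (auto simp: dist_commute)
  qed
  have Hy: "continuous_on S (\<lambda>t. H (y,t))" if "y \<in> U" "S \<subseteq> {0..1}" for y S
    by (rule continuous_on_compose2[OF Hc]) (use that in \<open>auto intro!: continuous_intros\<close>)
  have gc: "continuous_on B g" using AB(4) homeomorphism_cont2 by blast
  have eqg: "K y t = g (H (y,t))" if y: "y \<in> N \<inter> U" and t: "t \<in> {\<tau>0..\<tau>'}" for y t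
  proof (rule lift_unique[OF lh connected_Icc[of \<tau>0 \<tau>'], of "K y" "\<lambda>t. g (H (y,t))" \<tau>0 t])
    show "continuous_on {\<tau>0..\<tau>'} (K y)"
      by (rule continuous_on_subset[of "{0..1}"]) (use K Nprops[OF y] \<tau>00 \<tau>'1 in auto)
    show "continuous_on {\<tau>0..\<tau>'} (\<lambda>t. g (H (y, t)))"
      by (rule continuous_on_compose2[OF gc Hy]) (use Nprops[OF y] \<tau>00 \<tau>'1 inB[OF y] in auto)
    show "f (K y s) = f (g (H (y, s)))" if "s \<in> {\<tau>0..\<tau>'}" for s
      using K Nprops[OF y] that \<tau>00 \<tau>'1 homeomorphism_apply2[OF AB(4) inB[OF y that]] by auto
    show "\<tau>0 \<in> {\<tau>0..\<tau>'}" using \<tau>'1 by auto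
    show "K y \<tau>0 = g (H (y, \<tau>0))"
      using K Nprops[OF y] \<tau>00 \<tau>'1 homeomorphism_apply1[OF AB(4)] by force
    show "t \<in> {\<tau>0..\<tau>'}" using t .
  qed
  have c1: "continuous_on ((N \<inter> U) \<times> {0..\<tau>0}) G"
    by (rule continuous_on_subset[OF N0(3)]) (auto simp: N_def)
  have c2: "continuous_on ((N \<inter> U) \<times> {\<tau>0..\<tau>'}) G"
  proof (rule continuous_on_eq)
    show "continuous_on ((N \<inter> U) \<times> {\<tau>0..\<tau>'}) (\<lambda>z. g (H z))"
    proof (rule continuous_on_compose2[OF gc])
      show "continuous_on ((N \<inter> U) \<times> {\<tau>0..\<tau>'}) H"
        by (rule continuous_on_subset[OF Hc]) (use \<tau>00 \<tau>'1 in auto)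
      show "H ` ((N \<inter> U) \<times> {\<tau>0..\<tau>'}) \<subseteq> B" using inB by auto
    qed
    show "\<And>x. x \<in> (N \<inter> U) \<times> {\<tau>0..\<tau>'} \<Longrightarrow> g (H x) = G x"
      using eqg by (auto simp: G_def)
  qed
  have "continuous_on ((N \<inter> U) \<times> {0..\<tau>'}) (\<lambda>z. if snd z \<le> \<tau>0 then G z else G z)"
  proof (rule continuous_on_cases_le)
    have "{z \<in> (N \<inter> U) \<times> {0..\<tau>'}. snd z \<le> \<tau>0} = (N \<inter> U) \<times> {0..\<tau>0}" using \<tau>'1 by auto
    then show "continuous_on {z \<in> (N \<inter> U) \<times> {0..\<tau>'}. snd z \<le> \<tau>0} G" using c1 by simp
    have "{z \<in> (N \<inter> U) \<times> {0..\<tau>'}. \<tau>0 \<le> snd z} = (N \<inter> U) \<times> {\<tau>0..\<tau>'}" using \<tau>00 by auto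
    then show "continuous_on {z \<in> (N \<inter> U) \<times> {0..\<tau>'}. \<tau>0 \<le> snd z} G" using c2 by simp
  qed (auto intro: continuous_intros)
  then have "continuous_on ((N \<inter> U) \<times> {0..\<tau>'}) G" by simp
  then have "\<tau>' \<in> A" unfolding A_def using N \<tau>'1 \<tau>00 by auto
  then have "\<tau>' \<le> \<tau>" unfolding \<tau>_def using bddA by (rule cSup_upper)
  then have "\<tau>' = 1" using \<delta> by (auto simp: \<tau>'_def)
  then show ?thesis using \<open>continuous_on ((N \<inter> U) \<times> {0..\<tau>'}) G\<close> N unfolding G_def by auto
qed

end




lemma rect_reverse:
  assumes "rectifiable_path p" shows "rectifiable_path (\<lambda>t. p (1 - t))"
proof -
  obtain M where M: "\<And>x. x \<in> psums p 1 \<Longrightarrow> x \<le> M"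
    using assms unfolding rect_psums bdd_above_def by blast
  show ?thesis unfolding rect_psums
  proof (rule bdd_aboveI)
    fix e assume "e \<in> psums (\<lambda>t. p (1 - t)) 1"
    then obtain t n where tn: "e = (\<Sum>i<n. dist (p (1 - t i)) (p (1 - t (Suc i))))" "t 0 = 0" "t n = 1"
      "\<forall>i<n. t i \<le> t (Suc i)"
      unfolding psums_def by blast
    define u where "u i = 1 - t (n - i)" for i
    have u0: "u 0 = 0" "u n = 1" using tn by (auto simp: u_def)
    have umono: "\<forall>i<n. u i \<le> u (Suc i)"
    proof (intro allI impI)
      fix i assume i: "i < n"
      then have "Suc (n - Suc i) = n - i" by simp
      moreover have "t (n - Suc i) \<le> t (Suc (n - Suc i))" using tn(4) i by simp
      ultimately show "u i \<le> u (Suc i)" by (simp add: u_def)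
    qed
    define g where "g j = dist (p (1 - t (Suc j))) (p (1 - t j))" for j
    have "(\<Sum>i<n. dist (p (u i)) (p (u (Suc i)))) = (\<Sum>i<n. g (n - Suc i))"
    proof (rule sum.cong[OF refl])
      fix i assume "i \<in> {..<n}"
      then have "Suc (n - Suc i) = n - i" by simp
      then show "dist (p (u i)) (p (u (Suc i))) = g (n - Suc i)"
        by (simp add: u_def g_def)
    qed
    also have "\<dots> = sum g {..<n}" by (rule sum.nat_diff_reindex)
    also have "\<dots> = e" unfolding tn(1) g_def by (simp add: dist_commute)
    finally have "e \<in> psums p 1"
      unfolding psums_def mem_Collect_eq
      by (intro exI[of _ u] exI[of _ n]) (use u0 umono in auto)
    then show "e \<le> M" using M by blast
  qed
qed

lemma cont_rev:
  fixes c :: "real \<Rightarrow> 'a::topological_space"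
  assumes "continuous_on {0..1} c" shows "continuous_on {0..1} (\<lambda>t. c (1 - t))"
proof -
  have 1: "continuous_on {0..1} (\<lambda>t::real. 1 - t)"
    using continuous_on_diff[OF continuous_on_const continuous_on_id] .
  have 2: "(\<lambda>t::real. 1 - t) ` {0..1} \<subseteq> {0..1}" by auto
  show ?thesis using continuous_on_compose2[OF assms 1 2] by simp
qed

context expset begin

definition LF :: "(real \<Rightarrow> 'b) \<Rightarrow> 'a \<Rightarrow> real \<Rightarrow> 'a" where
  "LF \<gamma> x = (SOME c. continuous_on {0..1} c \<and> c 0 = x \<and> (\<forall>t\<in>{0..1}. f (c t) = \<gamma> t))"

lemma LF:
  assumes "continuous_on {0..1} \<gamma>" "rectifiable_path \<gamma>" "f x = \<gamma> 0"
  shows "continuous_on {0..1} (LF \<gamma> x) \<and> LF \<gamma> x 0 = x \<and> (\<forall>t\<in>{0..1}. f (LF \<gamma> x t) = \<gamma> t)"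
  using someI_ex[OF lift_exists[OF assms]] unfolding LF_def .

lemma sheets:
  fixes H :: "'b \<times> real \<Rightarrow> 'b"
  assumes U: "open U" and Hc: "continuous_on (U \<times> {0..1}) H"
   and H01: "\<forall>y\<in>U. H (y,0) = y0 \<and> H (y,1) = y" and Hr: "\<forall>y\<in>U. rectifiable_path (\<lambda>t. H (y,t))"
  shows "(\<forall>x. f x \<in> U \<longrightarrow> y0 \<in> range f) \<and> (y0 \<in> range f \<longrightarrow> U \<subseteq> range f) \<and>
    (\<exists>v. \<Union>v = f -` U \<and> (\<forall>u\<in>v. open u) \<and> pairwise disjnt v \<and> (\<forall>u\<in>v. \<exists>q. homeomorphism u U f q))"
proof -
  have Hp: "continuous_on {0..1} (\<lambda>t. H (y,t))" if "y \<in> U" for y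
    by (rule continuous_on_compose2[OF Hc]) (use that in \<open>auto intro!: continuous_intros\<close>)
  have L: "continuous_on {0..1} (LF (\<lambda>t. H (y,t)) x0) \<and> LF (\<lambda>t. H (y,t)) x0 0 = x0 \<and>
      (\<forall>t\<in>{0..1}. f (LF (\<lambda>t. H (y,t)) x0 t) = H (y,t))" if "y \<in> U" "f x0 = y0" for y x0
    using LF[OF Hp[OF that(1)]] Hr H01 that by auto
  define s where "s x0 y = LF (\<lambda>t. H (y,t)) x0 1" for x0 y
  have fs: "f (s x0 y) = y" if "f x0 = y0" "y \<in> U" for x0 y
    using L[OF that(2,1)] H01 that unfolding s_def by auto
  have sc: "continuous_on U (s x0)" if x0: "f x0 = y0" for x0
  proof -
    have "isCont (s x0) y1" if y1: "y1 \<in> U" for y1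
    proof -
      obtain N where N: "open N" "y1 \<in> N"
        "continuous_on ((N \<inter> U) \<times> {0..1}) (\<lambda>z. LF (\<lambda>t. H (fst z, t)) x0 (snd z))"
        using param_cont[OF Hc, of "\<lambda>y. LF (\<lambda>t. H (y,t)) x0" x0 y1, OF L[OF _ x0] y1] by blast
      have "continuous_on (N \<inter> U) (\<lambda>y. LF (\<lambda>t. H (fst (y,1::real), t)) x0 (snd (y,1::real)))"
        by (rule continuous_on_compose2[OF N(3)]) (auto intro!: continuous_intros)
      then have "continuous_on (N \<inter> U) (s x0)" by (simp add: s_def)
      moreover have "open (N \<inter> U)" using N U by auto
      ultimately show ?thesis using N y1 continuous_on_eq_continuous_at by blast
    qed
    then show ?thesis by (simp add: continuous_at_imp_continuous_on)
  qed
  have scover: "\<exists>x0. f x0 = y0 \<and> s x0 y = x" if y: "y \<in> U" and fx: "f x = y" for x y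
  proof -
    let ?\<rho> = "\<lambda>t. H (y, 1 - t)"
    have \<rho>c: "continuous_on {0..1} ?\<rho>" using cont_rev[OF Hp[OF y]] .
    have \<rho>r: "rectifiable_path ?\<rho>" using rect_reverse[of "\<lambda>t. H (y,t)"] Hr y by auto
    have \<rho>0: "f x = ?\<rho> 0" using H01 y fx by auto
    define c where "c = LF ?\<rho> x"
    have c: "continuous_on {0..1} c" "c 0 = x" "\<forall>t\<in>{0..1}. f (c t) = H (y, 1 - t)"
      using LF[OF \<rho>c \<rho>r \<rho>0] unfolding c_def by auto
    define x0 where "x0 = c 1"
    have fx0: "f x0 = y0" using c(3) H01 y unfolding x0_def by auto
    have "LF (\<lambda>t. H (y,t)) x0 1 = c (1 - 1)"
    proof (rule lift_unique[OF lh connected_Icc[of 0 1], of "LF (\<lambda>t. H (y,t)) x0" "\<lambda>t. c (1 - t)" 0 1])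
      show "continuous_on {0..1} (LF (\<lambda>t. H (y, t)) x0)" using L[OF y fx0] by auto
      show "continuous_on {0..1} (\<lambda>t. c (1 - t))" using cont_rev[OF c(1)] .
      show "f (LF (\<lambda>t. H (y, t)) x0 t) = f (c (1 - t))" if "t \<in> {0..1}" for t
        using L[OF y fx0] c(3) that by auto
      show "LF (\<lambda>t. H (y, t)) x0 0 = c (1 - 0)" using L[OF y fx0] x0_def by simp
    qed auto
    then have "s x0 y = x" using c(2) by (simp add: s_def)
    then show ?thesis using fx0 by blast
  qed
  have sinj: "x0 = x1" if "f x0 = y0" "f x1 = y0" "y \<in> U" "y' \<in> U" "s x0 y = s x1 y'" for x0 x1 y y'
  proof -
    have yy: "y' = y" using fs[OF that(1,3)] fs[OF that(2,4)] that(5) by metis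
    let ?c0 = "LF (\<lambda>t. H (y,t)) x0" and ?c1 = "LF (\<lambda>t. H (y,t)) x1"
    have "?c0 (1 - 1) = ?c1 (1 - 1)"
    proof (rule lift_unique[OF lh connected_Icc[of 0 1], of "\<lambda>t. ?c0 (1 - t)" "\<lambda>t. ?c1 (1 - t)" 0 1])
      show "continuous_on {0..1} (\<lambda>t. ?c0 (1 - t))" using cont_rev L[OF that(3,1)] by blast
      show "continuous_on {0..1} (\<lambda>t. ?c1 (1 - t))" using cont_rev L[OF that(3,2)] by blast
      show "f (?c0 (1 - t)) = f (?c1 (1 - t))" if "t \<in> {0..1}" for t
        using L[OF \<open>y \<in> U\<close> \<open>f x0 = y0\<close>] L[OF \<open>y \<in> U\<close> \<open>f x1 = y0\<close>] that by auto
      show "?c0 (1 - 0) = ?c1 (1 - 0)" using that(5) yy by (simp add: s_def)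
    qed auto
    then show ?thesis using L[OF that(3,1)] L[OF that(3,2)] by simp
  qed
  have sopen: "open (s x0 ` U)" if x0: "f x0 = y0" for x0
  proof (subst open_subopen, intro ballI)
    fix w assume "w \<in> s x0 ` U"
    then obtain y where y: "y \<in> U" "w = s x0 y" by blast
    obtain A B g where A: "w \<in> A" "open A" "open B" "homeomorphism A B f g"
      using lh unfolding local_homeomorphism_def by blast
    have "openin (top_of_set U) (U \<inter> s x0 -` A)"
      using sc[OF x0] A(2) by (rule continuous_openin_preimage_gen)
    then have o1: "open (U \<inter> s x0 -` A)" using U openin_open_trans by blast
    have o2: "open (A \<inter> f -` (U \<inter> s x0 -` A))"
      using open_Int[OF A(2) continuous_open_vimage[OF o1 lh_isCont[OF lh]]] .
    have "w \<in> A \<inter> f -` (U \<inter> s x0 -` A)" using y A fs[OF x0 y(1)] by auto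
    moreover have "A \<inter> f -` (U \<inter> s x0 -` A) \<subseteq> s x0 ` U"
    proof
      fix w' assume w': "w' \<in> A \<inter> f -` (U \<inter> s x0 -` A)"
      then have "f (s x0 (f w')) = f w'" using fs[OF x0] by auto
      then have "g (f (s x0 (f w'))) = g (f w')" by simp
      then have "s x0 (f w') = w'" using w' homeomorphism_apply1[OF A(4)] by auto
      moreover have "f w' \<in> U" using w' by simp
      ultimately show "w' \<in> s x0 ` U" by (metis imageI)
    qed
    ultimately show "\<exists>T. open T \<and> w \<in> T \<and> T \<subseteq> s x0 ` U" using o2 by blast
  qed
  define v where "v = (\<lambda>x0. s x0 ` U) ` {x0. f x0 = y0}"
  have "\<Union>v = f -` U"
  proof
    show "\<Union>v \<subseteq> f -` U"
    proof
      fix w assume "w \<in> \<Union>v"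
      then obtain x0 y where "f x0 = y0" "y \<in> U" "w = s x0 y" unfolding v_def by blast
      then show "w \<in> f -` U" using fs by simp
    qed
    show "f -` U \<subseteq> \<Union>v"
    proof
      fix x assume "x \<in> f -` U"
      then have fxU: "f x \<in> U" by simp
      obtain x0 where x0: "f x0 = y0" "s x0 (f x) = x" using scover[OF fxU refl] by blast
      have "s x0 ` U \<in> v" unfolding v_def using x0(1) by blast
      moreover have "x \<in> s x0 ` U" using x0(2) fxU by (metis imageI)
      ultimately show "x \<in> \<Union>v" by blast
    qed
  qed
  moreover have "\<forall>u\<in>v. open u"
  proof
    fix u assume "u \<in> v"
    then obtain x0 where "f x0 = y0" "u = s x0 ` U" unfolding v_def by blast
    then show "open u" using sopen by simp
  qed
  moreover have "pairwise disjnt v"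
  proof (rule pairwiseI)
    fix u1 u2 assume u: "u1 \<in> v" "u2 \<in> v" "u1 \<noteq> u2"
    then obtain x0 x1 where x: "f x0 = y0" "u1 = s x0 ` U" "f x1 = y0" "u2 = s x1 ` U"
      unfolding v_def by blast
    show "disjnt u1 u2" unfolding disjnt_def
    proof (rule ccontr)
      assume "u1 \<inter> u2 \<noteq> {}"
      then obtain y y' where yy: "y \<in> U" "y' \<in> U" "s x0 y = s x1 y'" using x by blast
      have "x0 = x1" by (rule sinj[OF x(1) x(3) yy])
      then show False using x u(3) by simp
    qed
  qed
  moreover have "\<forall>u\<in>v. \<exists>q. homeomorphism u U f q"
  proof
    fix u assume "u \<in> v"
    then obtain x0 where x0: "f x0 = y0" "u = s x0 ` U" unfolding v_def by blast
    have "homeomorphism u U f (s x0)"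
      unfolding homeomorphism_def
    proof (intro conjI)
      show "continuous_on u f" using lh_continuous[OF lh] .
      show "f ` u = U"
      proof
        show "f ` u \<subseteq> U" using fs[OF x0(1)] x0(2) by auto
        show "U \<subseteq> f ` u"
        proof
          fix y assume y: "y \<in> U"
          then have "f (s x0 y) = y" "s x0 y \<in> u" using fs[OF x0(1)] x0(2) by auto
          then show "y \<in> f ` u" by (metis imageI)
        qed
      qed
      show "continuous_on U (s x0)" using sc[OF x0(1)] .
      show "s x0 ` U = u" using x0(2) by simp
      show "\<forall>x\<in>u. s x0 (f x) = x" using fs[OF x0(1)] x0(2) by auto
      show "\<forall>y\<in>U. f (s x0 y) = y" using fs[OF x0(1)] by auto
    qed
    then show "\<exists>q. homeomorphism u U f q" by blast
  qed
  moreover have "\<forall>x. f x \<in> U \<longrightarrow> y0 \<in> range f"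
  proof (intro allI impI)
    fix x assume "f x \<in> U"
    then obtain x0 where "f x0 = y0" using scover[of "f x" x] by blast
    then show "y0 \<in> range f" by (metis rangeI)
  qed
  moreover have "y0 \<in> range f \<longrightarrow> U \<subseteq> range f"
  proof
    assume "y0 \<in> range f"
    then obtain x0 where "f x0 = y0" by auto
    then show "U \<subseteq> range f" using fs[of x0] by (metis rangeI subsetI)
  qed
  ultimately show ?thesis by blast
qed

end




definition sheeted :: "('a::topological_space \<Rightarrow> 'b::topological_space) \<Rightarrow> 'b set \<Rightarrow> bool" where
  "sheeted f U \<longleftrightarrow> (\<exists>v. \<Union>v = f -` U \<and> (\<forall>u\<in>v. open u) \<and> pairwise disjnt v \<and>
     (\<forall>u\<in>v. \<exists>q. homeomorphism u U f q))"

theorem mainTheorem11: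
  fixes f :: "'a::metric_space \<Rightarrow> 'b::metric_space" and \<alpha> :: real
  assumes "local_homeomorphism f"
    and "complete (UNIV :: 'a set)"
    and "\<And>x::'a. x islimpt (UNIV :: 'a set)"
    and "path_connected (UNIV :: 'b set)"
    and "locally_R_contractible (UNIV :: 'b set)"
    and "\<alpha> > 0"
    and "\<And>x. lower_scalar_deriv f x \<ge> ereal \<alpha>"
  shows "covering_space (UNIV :: 'a set) f (UNIV :: 'b set)"
proof -
  define \<beta> where "\<beta> = \<alpha> / 2"
  have bpos: "\<beta> > 0" using assms(6) by (simp add: \<beta>_def)
  have expand: "\<exists>r>0. \<forall>z. dist z x < r \<longrightarrow> \<beta> * dist z x \<le> dist (f z) (f x)" for x
  proof -
    have "ereal \<beta> < ereal \<alpha>" using assms(6) by (simp add: \<beta>_def)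
    also have "\<dots> \<le> lower_scalar_deriv f x" using assms(7) .
    finally have "\<forall>\<^sub>F z in at x. ereal \<beta> < ereal (dist (f z) (f x) / dist z x)"
      unfolding lower_scalar_deriv_def by (rule less_LiminfD)
    then obtain d where d: "d > 0"
      "\<forall>z\<in>UNIV. z \<noteq> x \<and> dist z x < d \<longrightarrow> ereal \<beta> < ereal (dist (f z) (f x) / dist z x)"
      unfolding eventually_at by blast
    show ?thesis
    proof (intro exI[of _ d] conjI allI impI)
      show "d > 0" using d by simp
      fix z assume z: "dist z x < d"
      show "\<beta> * dist z x \<le> dist (f z) (f x)"
      proof (cases "z = x")
        case True then show ?thesis by simp
      next
        case False
        then have "\<beta> < dist (f z) (f x) / dist z x" using d z by auto
        moreover have "dist z x > 0" using False by simp
        ultimately have "\<beta> * dist z x < dist (f z) (f x)" by (simp add: less_divide_eq)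
        then show ?thesis by simp
      qed
    qed
  qed
  interpret E: expset f \<beta>
    by (rule expset.intro[OF assms(1) assms(2) bpos expand])
  have loc: "\<exists>U. open U \<and> y0 \<in> U \<and> (\<forall>x. f x \<in> U \<longrightarrow> y0 \<in> range f) \<and> (y0 \<in> range f \<longrightarrow> U \<subseteq> range f) \<and>
    sheeted f U" for y0
  proof -
    have "\<exists>U H. openin (top_of_set UNIV) U \<and> y0 \<in> U \<and>
        continuous_on (U \<times> {0..1::real}) H \<and> H ` (U \<times> {0..1}) \<subseteq> U \<and>
        (\<forall>t\<in>{0..1}. H (y0, t) = y0) \<and>
        (\<forall>y\<in>U. H (y, 0) = y0 \<and> H (y, 1) = y) \<and>
        (\<forall>y\<in>U. rectifiable_path (\<lambda>t. H (y, t)))"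
      using assms(5) unfolding locally_R_contractible_def by (rule bspec) simp
    then obtain U H where UHc: "openin (top_of_set UNIV) U \<and> y0 \<in> U \<and>
        continuous_on (U \<times> {0..1::real}) H \<and> H ` (U \<times> {0..1}) \<subseteq> U \<and>
        (\<forall>t\<in>{0..1}. H (y0, t) = y0) \<and>
        (\<forall>y\<in>U. H (y, 0) = y0 \<and> H (y, 1) = y) \<and>
        (\<forall>y\<in>U. rectifiable_path (\<lambda>t. H (y, t)))" by (elim exE) (erule that)
    note UH = UHc[THEN conjunct1] UHc[THEN conjunct2, THEN conjunct1]
      UHc[THEN conjunct2, THEN conjunct2, THEN conjunct1]
      UHc[THEN conjunct2, THEN conjunct2, THEN conjunct2, THEN conjunct1]
      UHc[THEN conjunct2, THEN conjunct2, THEN conjunct2, THEN conjunct2, THEN conjunct1]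
      UHc[THEN conjunct2, THEN conjunct2, THEN conjunct2, THEN conjunct2, THEN conjunct2, THEN conjunct1]
      UHc[THEN conjunct2, THEN conjunct2, THEN conjunct2, THEN conjunct2, THEN conjunct2, THEN conjunct2]
    have oU: "open U" using UH(1) by simp
    have S: "(\<forall>x. f x \<in> U \<longrightarrow> y0 \<in> range f) \<and> (y0 \<in> range f \<longrightarrow> U \<subseteq> range f) \<and> sheeted f U"
      using E.sheets[OF oU UH(3) UH(6) UH(7)] unfolding sheeted_def .
    show ?thesis
      by (rule exI[of _ U]) (rule conjI[OF oU conjI[OF UH(2) S]])
  qed
  have surj: "range f = UNIV"
  proof -
    have o1: "open (range f)"
    proof (subst open_subopen, intro ballI)
      fix y assume y: "y \<in> range f"
      obtain U where U: "open U" "y \<in> U" "y \<in> range f \<longrightarrow> U \<subseteq> range f"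
        using loc[of y] by (elim exE conjE) (rule that; assumption)
      have "U \<subseteq> range f" using U(3) y by (rule mp)
      then show "\<exists>T. open T \<and> y \<in> T \<and> T \<subseteq> range f" using U(1,2) by (intro exI[of _ U] conjI)
    qed
    have o2: "open (- range f)"
    proof (subst open_subopen, intro ballI)
      fix y assume y: "y \<in> - range f"
      obtain U where U: "open U" "y \<in> U" "\<forall>x. f x \<in> U \<longrightarrow> y \<in> range f"
        using loc[of y] by (elim exE conjE) (rule that; assumption)
      have "U \<subseteq> - range f"
      proof
        fix z assume "z \<in> U"
        show "z \<in> - range f"
        proof
          assume "z \<in> range f"
          then obtain x where "z = f x" by (rule rangeE)
          then have "f x \<in> U" using \<open>z \<in> U\<close> by simp
          then have "y \<in> range f" using U(3) by (rule_tac mp[OF spec[OF U(3)]])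
          then show False using y by simp
        qed
      qed
      then show "\<exists>T. open T \<and> y \<in> T \<and> T \<subseteq> - range f" using U(1,2) by (intro exI[of _ U] conjI)
    qed
    have "connected (UNIV :: 'b set)" using assms(4) by (rule path_connected_imp_connected)
    moreover have "openin (top_of_set UNIV) (range f)" using o1 by simp
    moreover have "closedin (top_of_set UNIV) (range f)"
    proof -
      have "closed (range f)" using o2 by (simp add: closed_def)
      then show ?thesis by simp
    qed
    ultimately have "range f = {} \<or> range f = UNIV"
      using connected_clopen[THEN iffD1, rule_format] by blast
    then show ?thesis by auto
  qed
  show ?thesis unfolding covering_space_def
  proof (intro conjI ballI)
    show "continuous_on UNIV f" by (rule lh_continuous[OF assms(1)])
    show "f ` UNIV = UNIV" by (rule surj)
    fix y0 :: 'b
    obtain U where U: "open U" "y0 \<in> U" "sheeted f U"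
      using loc[of y0] by (elim exE conjE) (rule that; assumption)
    obtain v where Uv: "\<Union>v = f -` U" "\<forall>u\<in>v. open u" "pairwise disjnt v"
      "\<forall>u\<in>v. \<exists>q. homeomorphism u U f q"
      using U(3) unfolding sheeted_def by (elim exE conjE) (rule that; assumption)
    show "\<exists>T. y0 \<in> T \<and> openin (top_of_set UNIV) T \<and> (\<exists>v. \<Union>v = UNIV \<inter> f -` T \<and>
      (\<forall>u\<in>v. openin (top_of_set UNIV) u) \<and> pairwise disjnt v \<and> (\<forall>u\<in>v. \<exists>q. homeomorphism u T f q))"
    proof (intro exI[of _ U] conjI exI[of _ v])
      show "y0 \<in> U" by (rule U(2))
      show "openin (top_of_set UNIV) U" using U(1) by simp
      show "\<Union>v = UNIV \<inter> f -` U" using Uv(1) by simp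
      show "\<forall>u\<in>v. openin (top_of_set UNIV) u" using Uv(2) by simp
      show "pairwise disjnt v" by (rule Uv(3))
      show "\<forall>u\<in>v. \<exists>q. homeomorphism u U f q" by (rule Uv(4))
    qed
  qed
qed



end
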